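(* Let $0<r_1<r_2<r_3$ satisfy \[ r_2(r_3-r_1)^3 - r_1(r_3+r_2)^3 - r_3(r_1+r_2)^3 \ \ge\ 0 . \] Then the only stationary points (zeros of the gradient) of the smooth function $f:\mathbb T^2\to\mathbb R$, \[ f(\alpha,\beta)=F_{12}(\alpha)+F_{13}(\beta)+F_{23}(\alpha-\beta),\] are $(0,0)$, $(0,\pi)$, $(\pi,0)$ and $(\pi,\pi)$.
   Context: For $i,j\in\{1,2,3\}$ and $\theta\in\mathbb R/2\pi\mathbb Z$ set $D_{ij}(\theta)=r_i^2+r_j^2-2r_ir_j\cos\theta$ and $F_{ij}(\theta)=D_{ij}(\theta)^{-1/2}$ (smooth since $r_i\neq r_j$). *)

theory Defs
  imports "HOL-Analysis.Analysis"
begin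

definition Dij :: "real \<Rightarrow> real \<Rightarrow> real \<Rightarrow> real" where
  "Dij ri rj \<theta> = ri\<^sup>2 + rj\<^sup>2 - 2 * ri * rj * cos \<theta>"

definition Fij :: "real \<Rightarrow> real \<Rightarrow> real \<Rightarrow> real" where
  "Fij ri rj \<theta> = Dij ri rj \<theta> powr (-1/2)"

text \<open>f(alpha,beta) = F_12(alpha) + F_13(beta) + F_23(alpha - beta), as a
  2pi-periodic function on R^2 (i.e. a function on the torus).\<close>
definition ftorus :: "real \<Rightarrow> real \<Rightarrow> real \<Rightarrow> real \<times> real \<Rightarrow> real" where
  "ftorus r1 r2 r3 p = Fij r1 r2 (fst p) + Fij r1 r3 (snd p) + Fij r2 r3 (fst p - snd p)"

definition cong_2pi :: "real \<Rightarrow> real \<Rightarrow> bool" where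
  "cong_2pi x y \<longleftrightarrow> (\<exists>k::int. x - y = 2 * pi * of_int k)"

end

theory Submission
  imports Defs
begin

lemma D_bounds:
  assumes "0 < ri" "ri < rj"
  shows "(rj - ri)^2 \<le> Dij ri rj t" "Dij ri rj t \<le> (ri + rj)^2" "0 < Dij ri rj t"
proof -
  have p: "0 < ri * rj" using assms by simp
  have c1: "ri*rj*cos t \<le> ri*rj" using mult_left_mono[OF cos_le_one[of t], of "ri*rj"] p by simp
  have c2: "-(ri*rj) \<le> ri*rj*cos t" using mult_left_mono[OF cos_ge_minus_one[of t], of "ri*rj"] p by simp
  show a: "(rj - ri)^2 \<le> Dij ri rj t" unfolding Dij_def using c1 by (simp add: power2_eq_square algebra_simps)
  show "Dij ri rj t \<le> (ri + rj)^2" unfolding Dij_def using c2 by (simp add: power2_eq_square algebra_simps)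
  have "0 < (rj - ri)^2" using assms by simp
  then show "0 < Dij ri rj t" using a by linarith
qed

definition P :: "real \<Rightarrow> real \<Rightarrow> real \<Rightarrow> real" where
  "P ri rj t = ri * rj * sin t * Dij ri rj t powr (-3/2)"

lemma F_deriv:
  assumes "0 < ri" "ri < rj"
  shows "(Fij ri rj has_real_derivative (- P ri rj t)) (at t)"
proof -
  have D: "((\<lambda>t. Dij ri rj t) has_real_derivative 2 * ri * rj * sin t) (at t)"
    unfolding Dij_def by (auto intro!: derivative_eq_intros)
  have "((\<lambda>t. Dij ri rj t powr (-1/2)) has_real_derivative
      (-1/2) * (Dij ri rj t) powr (-1/2 - of_nat 1) * (2 * ri * rj * sin t)) (at t)"
    by (rule DERIV_fun_powr[OF D D_bounds(3)[OF assms]])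
  moreover have "(-1/2) * (Dij ri rj t) powr (-1/2 - of_nat 1) * (2 * ri * rj * sin t) = - P ri rj t"
    unfolding P_def by simp
  ultimately show ?thesis unfolding Fij_def[abs_def] by simp
qed

lemma f_deriv:
  assumes "0 < r1" "r1 < r2" "r2 < r3"
  shows "(ftorus r1 r2 r3 has_derivative
     (\<lambda>h. fst h * (- P r1 r2 a) + snd h * (- P r1 r3 b) + (fst h - snd h) * (- P r2 r3 (a - b)))) (at (a, b))"
proof -
  have 1: "((\<lambda>p. Fij r1 r2 (fst p)) has_derivative (\<lambda>h. fst h * (- P r1 r2 a))) (at (a, b))"
  proof -
    have d: "(Fij r1 r2 has_real_derivative - P r1 r2 a) (at (fst (a,b)))" using F_deriv assms by simp
    show ?thesis using DERIV_compose_FDERIV[OF d has_derivative_fst[OF has_derivative_ident], of UNIV] by simp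
  qed
  have 2: "((\<lambda>p. Fij r1 r3 (snd p)) has_derivative (\<lambda>h. snd h * (- P r1 r3 b))) (at (a, b))"
  proof -
    have d: "(Fij r1 r3 has_real_derivative - P r1 r3 b) (at (snd (a,b)))" using F_deriv assms by simp
    show ?thesis using DERIV_compose_FDERIV[OF d has_derivative_snd[OF has_derivative_ident], of UNIV] by simp
  qed
  have 3: "((\<lambda>p. Fij r2 r3 (fst p - snd p)) has_derivative (\<lambda>h. (fst h - snd h) * (- P r2 r3 (a - b)))) (at (a, b))"
  proof -
    have d: "(Fij r2 r3 has_real_derivative - P r2 r3 (a - b)) (at ((\<lambda>x. fst x - snd x) (a,b)))" using F_deriv assms by simp
    show ?thesis using DERIV_compose_FDERIV[OF d has_derivative_diff[OF has_derivative_fst[OF has_derivative_ident] has_derivative_snd[OF has_derivative_ident]], of UNIV] by simp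
  qed
  show ?thesis unfolding ftorus_def[abs_def]
    by (rule has_derivative_add[OF has_derivative_add[OF 1 2] 3])
qed

lemma sq_powr: "0 < (x::real) \<Longrightarrow> (x^2) powr (3/2) = x^3"
proof -
  assume x: "0 < x"
  have "x^2 = x powr 2" using powr_realpow[of x 2] x by simp
  then have "(x^2) powr (3/2) = (x powr 2) powr (3/2)" by simp
  also have "\<dots> = x powr (2 * (3/2))" by (rule powr_powr)
  also have "\<dots> = x powr 3" by simp
  also have "\<dots> = x^3" using powr_realpow[of x 3] x by simp
  finally show ?thesis .
qed

lemma sin_zero_cong: "sin x = 0 \<longleftrightarrow> cong_2pi x 0 \<or> cong_2pi x pi"
proof
  assume "sin x = 0"
  then obtain i :: int where i: "x = of_int i * pi" using sin_zero_iff_int2 by blast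
  show "cong_2pi x 0 \<or> cong_2pi x pi"
  proof (cases "even i")
    case True
    then obtain k where "i = 2*k" by auto
    then show ?thesis unfolding cong_2pi_def using i by (intro disjI1 exI[of _ k]) simp
  next
    case False
    then obtain k where "i = 2*k+1" using oddE by blast
    then show ?thesis unfolding cong_2pi_def using i by (intro disjI2 exI[of _ k]) (simp add: algebra_simps)
  qed
next
  assume "cong_2pi x 0 \<or> cong_2pi x pi"
  then obtain k :: int where "x = 2 * pi * of_int k \<or> x = 2 * pi * of_int k + pi"
    unfolding cong_2pi_def by (auto simp: algebra_simps)
  then have "x = of_int (2*k) * pi \<or> x = of_int (2*k+1) * pi" by (auto simp: algebra_simps)
  then show "sin x = 0" using sin_zero_iff_int2 by blast
qed

lemma trig_ineq:
  fixes a b :: real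
  assumes "sin a \<noteq> 0" "sin (a - b) \<noteq> 0"
  shows "\<bar>sin b\<bar> < \<bar>sin a\<bar> + \<bar>sin (a - b)\<bar>"
proof -
  let ?d = "a - b"
  have "b = a - ?d" by simp
  then have e: "sin b = sin a * cos ?d - cos a * sin ?d" by (metis sin_diff)
  have cd: "\<bar>cos ?d\<bar> < 1"
  proof -
    have "(sin ?d)^2 + (cos ?d)^2 = 1" by simp
    moreover have "(sin ?d)^2 > 0" using assms by simp
    ultimately have "(cos ?d)^2 < 1" by linarith
    then show ?thesis by (simp add: abs_square_less_1)
  qed
  have ca: "\<bar>cos a\<bar> \<le> 1" by simp
  have "\<bar>sin b\<bar> \<le> \<bar>sin a\<bar> * \<bar>cos ?d\<bar> + \<bar>cos a\<bar> * \<bar>sin ?d\<bar>"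
    unfolding e by (metis abs_mult abs_triangle_ineq4)
  also have "\<dots> < \<bar>sin a\<bar> + \<bar>sin ?d\<bar>"
  proof -
    have "\<bar>sin a\<bar> * \<bar>cos ?d\<bar> < \<bar>sin a\<bar>" using cd assms by simp
    moreover have "\<bar>cos a\<bar> * \<bar>sin ?d\<bar> \<le> \<bar>sin ?d\<bar>" using ca mult_right_mono[OF ca, of "\<bar>sin ?d\<bar>"] by simp
    ultimately show ?thesis by linarith
  qed
  finally show ?thesis .
qed

definition H :: "real \<Rightarrow> real \<Rightarrow> real \<Rightarrow> real" where
  "H ri rj t = Dij ri rj t powr (3/2) / (ri * rj)"

lemma P_H:
  assumes "0 < ri" "ri < rj"
  shows "P ri rj t = sin t / H ri rj t" "0 < H ri rj t"
proof -
  have D: "0 < Dij ri rj t" using D_bounds assms by blast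
  have "Dij ri rj t powr (-3/2) = 1 / Dij ri rj t powr (3/2)"
    using powr_minus_divide[of "Dij ri rj t" "3/2"] by simp
  then show "P ri rj t = sin t / H ri rj t" unfolding P_def H_def by simp
  show "0 < H ri rj t" unfolding H_def using D assms by simp
qed

lemma H_lower:
  assumes "0 < ri" "ri < rj"
  shows "(rj - ri)^3 / (ri*rj) \<le> H ri rj t"
proof -
  have "((rj-ri)^2) powr (3/2) \<le> Dij ri rj t powr (3/2)"
    by (rule powr_mono2) (use D_bounds[OF assms, of t] in auto)
  then have "(rj-ri)^3 \<le> Dij ri rj t powr (3/2)" using sq_powr[of "rj-ri"] assms by simp
  then show ?thesis unfolding H_def using assms by (simp add: divide_right_mono)
qed

lemma H_upper:
  assumes "0 < ri" "ri < rj"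
  shows "H ri rj t \<le> (ri + rj)^3 / (ri*rj)"
proof -
  have "Dij ri rj t powr (3/2) \<le> ((ri+rj)^2) powr (3/2)"
    by (rule powr_mono2) (use D_bounds[OF assms, of t] in auto)
  then have "Dij ri rj t powr (3/2) \<le> (ri+rj)^3" using sq_powr[of "ri+rj"] assms by simp
  then show ?thesis unfolding H_def using assms by (simp add: divide_right_mono)
qed

lemma key:
  fixes r1 r2 r3 a b :: real
  assumes r: "0 < r1" "r1 < r2" "r2 < r3"
    and c: "r2 * (r3 - r1)^3 - r1 * (r3 + r2)^3 - r3 * (r1 + r2)^3 \<ge> 0"
  shows "(P r1 r2 a + P r2 r3 (a - b) = 0 \<and> P r1 r3 b - P r2 r3 (a - b) = 0)
     \<longleftrightarrow> sin a = 0 \<and> sin b = 0"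
proof
  assume "sin a = 0 \<and> sin b = 0"
  then have "sin (a - b) = 0" "sin a = 0" "sin b = 0" by (auto simp: sin_diff)
  then show "P r1 r2 a + P r2 r3 (a - b) = 0 \<and> P r1 r3 b - P r2 r3 (a - b) = 0"
    unfolding P_def by simp
next
  assume eq: "P r1 r2 a + P r2 r3 (a - b) = 0 \<and> P r1 r3 b - P r2 r3 (a - b) = 0"
  define h12 where "h12 = H r1 r2 a"
  define h13 where "h13 = H r1 r3 b"
  define h23 where "h23 = H r2 r3 (a - b)"
  have r13: "r1 < r3" using r by linarith
  have p12: "0 < h12" unfolding h12_def using P_H r by blast
  have p13: "0 < h13" unfolding h13_def using P_H r r13 by blast
  have p23: "0 < h23" unfolding h23_def using P_H r by (meson less_trans)
  have e1: "sin a / h12 + sin (a - b) / h23 = 0"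
    using eq P_H(1)[of r1 r2 a] P_H(1)[of r2 r3 "a-b"] r unfolding h12_def h23_def by simp
  have e2: "sin b / h13 = sin (a - b) / h23"
    using eq P_H(1)[of r1 r3 b] P_H(1)[of r2 r3 "a-b"] r r13 unfolding h13_def h23_def by simp
  have sa: "sin a = - sin (a - b) * h12 / h23" using e1 p12 p23 by (simp add: field_simps)
  have sb: "sin b = sin (a - b) * h13 / h23" using e2 p13 p23 by (simp add: field_simps)
  have hb: "h12 + h23 \<le> h13"
  proof -
    have "(r1 + r2)^3 / (r1*r2) + (r2 + r3)^3 / (r2*r3) \<le> (r3 - r1)^3 / (r1*r3)"
    proof -
      have "r1 * (r3 + r2)^3 + r3 * (r1 + r2)^3 \<le> r2 * (r3 - r1)^3" using c by linarith
      then have "(r1 * (r3 + r2)^3 + r3 * (r1 + r2)^3) / (r1*r2*r3) \<le> r2 * (r3 - r1)^3 / (r1*r2*r3)"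
        using r by (intro divide_right_mono) auto
      moreover have "(r1 * (r3 + r2)^3 + r3 * (r1 + r2)^3) / (r1*r2*r3) = (r1 + r2)^3 / (r1*r2) + (r2 + r3)^3 / (r2*r3)"
        using r by (simp add: add_divide_distrib add.commute)
      moreover have "r2 * (r3 - r1)^3 / (r1*r2*r3) = (r3 - r1)^3 / (r1*r3)"
        using r by simp
      ultimately show ?thesis by simp
    qed
    moreover have "h12 \<le> (r1 + r2)^3 / (r1*r2)" unfolding h12_def using H_upper r by blast
    moreover have "h23 \<le> (r2 + r3)^3 / (r2*r3)" unfolding h23_def using H_upper r by (meson less_trans)
    moreover have "(r3 - r1)^3 / (r1*r3) \<le> h13" unfolding h13_def using H_lower r r13 by blast
    ultimately show ?thesis by linarith
  qed
  show "sin a = 0 \<and> sin b = 0"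
  proof (rule ccontr)
    assume nz: "\<not> (sin a = 0 \<and> sin b = 0)"
    have sd: "sin (a - b) \<noteq> 0" using nz sa sb by auto
    have sa0: "sin a \<noteq> 0" using sa sd p12 p23 by simp
    have lt: "\<bar>sin b\<bar> < \<bar>sin a\<bar> + \<bar>sin (a - b)\<bar>" by (rule trig_ineq[OF sa0 sd])
    have "\<bar>sin a\<bar> + \<bar>sin (a - b)\<bar> = \<bar>sin (a - b)\<bar> * (h12 + h23) / h23"
    proof -
      have "\<bar>sin a\<bar> = \<bar>sin (a - b)\<bar> * h12 / h23" using sa p12 p23 by (simp add: abs_mult abs_divide)
      then show ?thesis using p23 by (simp add: add_divide_distrib distrib_left)
    qed
    also have "\<dots> \<le> \<bar>sin (a - b)\<bar> * h13 / h23"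
      using hb p23 by (intro divide_right_mono mult_left_mono) auto
    also have "\<dots> = \<bar>sin b\<bar>" using sb p13 p23 by (simp add: abs_mult abs_divide)
    finally show False using lt by linarith
  qed
qed

lemma stat_iff:
  assumes "0 < r1" "r1 < r2" "r2 < r3"
  shows "(ftorus r1 r2 r3 has_derivative (\<lambda>h. 0)) (at (a, b)) \<longleftrightarrow>
    (P r1 r2 a + P r2 r3 (a - b) = 0 \<and> P r1 r3 b - P r2 r3 (a - b) = 0)"
proof
  assume z: "(ftorus r1 r2 r3 has_derivative (\<lambda>h. 0)) (at (a, b))"
  have "(\<lambda>h. fst h * (- P r1 r2 a) + snd h * (- P r1 r3 b) + (fst h - snd h) * (- P r2 r3 (a - b))) = (\<lambda>h. 0)"
    by (rule has_derivative_unique[OF f_deriv[OF assms] z])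
  from fun_cong[OF this, of "(1,0)"] fun_cong[OF this, of "(0,1)"]
  show "P r1 r2 a + P r2 r3 (a - b) = 0 \<and> P r1 r3 b - P r2 r3 (a - b) = 0" by simp
next
  assume e: "P r1 r2 a + P r2 r3 (a - b) = 0 \<and> P r1 r3 b - P r2 r3 (a - b) = 0"
  have "(\<lambda>h. fst h * (- P r1 r2 a) + snd h * (- P r1 r3 b) + (fst h - snd h) * (- P r2 r3 (a - b))) = (\<lambda>h::real\<times>real. 0)"
  proof
    fix h :: "real \<times> real"
    have "fst h * (- P r1 r2 a) + snd h * (- P r1 r3 b) + (fst h - snd h) * (- P r2 r3 (a - b))
      = - (fst h * (P r1 r2 a + P r2 r3 (a - b)) + snd h * (P r1 r3 b - P r2 r3 (a - b)))"
      by (simp add: algebra_simps)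
    then show "fst h * (- P r1 r2 a) + snd h * (- P r1 r3 b) + (fst h - snd h) * (- P r2 r3 (a - b)) = 0"
      using e by simp
  qed
  then show "(ftorus r1 r2 r3 has_derivative (\<lambda>h. 0)) (at (a, b))" using f_deriv[OF assms, of a b] by simp
qed

theorem proposition2p2:
  fixes r1 r2 r3 \<alpha> \<beta> :: real
  assumes "0 < r1" and "r1 < r2" and "r2 < r3"
    and "r2 * (r3 - r1)^3 - r1 * (r3 + r2)^3 - r3 * (r1 + r2)^3 \<ge> 0"
  shows "(ftorus r1 r2 r3 has_derivative (\<lambda>h. 0)) (at (\<alpha>, \<beta>)) \<longleftrightarrow>
         ((cong_2pi \<alpha> 0 \<and> cong_2pi \<beta> 0) \<or> (cong_2pi \<alpha> 0 \<and> cong_2pi \<beta> pi) \<or>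
          (cong_2pi \<alpha> pi \<and> cong_2pi \<beta> 0) \<or> (cong_2pi \<alpha> pi \<and> cong_2pi \<beta> pi))"
  unfolding stat_iff[OF assms(1-3)] key[OF assms] sin_zero_cong by blast

end
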